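(* Let $n,m$ be positive integers with $m+2\le n$, and let $\tilde{\mathcal I}$ be the family of non-empty independent sets $I$ of $P_n^m$ with $\min I\leq m+1$ and $\max I\geq n-m$. For every $I\in\tilde{\mathcal I}$, $\gamma_{gr}(P_n^m,I)=\max I-\min I+1-(|I|-1)m$. Moreover, for every non-empty independent set $I$ of $P_n^m$ there exists $I'\in\tilde{\mathcal I}$ such that $\gamma_{gr}(P_n^m,I)\leq\gamma_{gr}(P_n^m,I')$.
   Context: $P_n^m$ is the $m$-th power of the path $P_n$: vertex set $[n]=\{1,\dots,n\}$, distinct $i,j$ adjacent iff $|i-j|\le m$. For a sequence $S=(v_1,\dots,v_k)$ of distinct vertices, $PN_S(v_i)=N[v_i]\setminus\bigcup_{j<i}N[v_j]$ ($N[\cdot]$ the closed neighborhood). $S$ is a legal dominating sequence if $\{v_1,\dots,v_k\}$ is dominating and each $PN_S(v_i)\ne\emptyset$. For such $S$ the footprinter $f_S(x)$ of a vertex $x$ is the unique $v_i$ with $x\in PN_S(v_i)$, and $I_S=\{v:f_S(v)=v\}$. For an independent set $I$, $\gamma_{gr}(G,I)$ is the maximum length of a legal dominating sequence $S$ of $G$ with $I_S=I$ ($-\infty$ if there is none). *)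

theory Defs
  imports Complex_Main "HOL-Library.Extended_Real"
begin

text \<open>A simple graph is given by a vertex set V and a symmetric irreflexive adjacency relation adj.\<close>

definition path_pow_V :: "nat \<Rightarrow> nat set" where
  "path_pow_V n = {1..n}"

definition path_pow_adj :: "nat \<Rightarrow> nat \<Rightarrow> nat \<Rightarrow> nat \<Rightarrow> bool" where
  "path_pow_adj n m i j \<longleftrightarrow> i \<in> {1..n} \<and> j \<in> {1..n} \<and> i \<noteq> j \<and>
     (if i \<le> j then j - i else i - j) \<le> m"

definition closed_nbhd :: "'a set \<Rightarrow> ('a \<Rightarrow> 'a \<Rightarrow> bool) \<Rightarrow> 'a \<Rightarrow> 'a set" where
  "closed_nbhd V adj v = {u \<in> V. u = v \<or> adj v u}"

definition PN :: "'a set \<Rightarrow> ('a \<Rightarrow> 'a \<Rightarrow> bool) \<Rightarrow> 'a list \<Rightarrow> nat \<Rightarrow> 'a set" where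
  "PN V adj S i = closed_nbhd V adj (S ! i) - (\<Union>j<i. closed_nbhd V adj (S ! j))"

definition dominating :: "'a set \<Rightarrow> ('a \<Rightarrow> 'a \<Rightarrow> bool) \<Rightarrow> 'a set \<Rightarrow> bool" where
  "dominating V adj D \<longleftrightarrow> D \<subseteq> V \<and> (\<forall>x\<in>V. \<exists>d\<in>D. x \<in> closed_nbhd V adj d)"

definition legal_dom_seq :: "'a set \<Rightarrow> ('a \<Rightarrow> 'a \<Rightarrow> bool) \<Rightarrow> 'a list \<Rightarrow> bool" where
  "legal_dom_seq V adj S \<longleftrightarrow> distinct S \<and> dominating V adj (set S) \<and>
     (\<forall>i<length S. PN V adj S i \<noteq> {})"

definition footprinter :: "'a set \<Rightarrow> ('a \<Rightarrow> 'a \<Rightarrow> bool) \<Rightarrow> 'a list \<Rightarrow> 'a \<Rightarrow> 'a" where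
  "footprinter V adj S x = S ! (THE i. i < length S \<and> x \<in> PN V adj S i)"

definition I_seq :: "'a set \<Rightarrow> ('a \<Rightarrow> 'a \<Rightarrow> bool) \<Rightarrow> 'a list \<Rightarrow> 'a set" where
  "I_seq V adj S = {v \<in> V. footprinter V adj S v = v}"

definition independent :: "'a set \<Rightarrow> ('a \<Rightarrow> 'a \<Rightarrow> bool) \<Rightarrow> 'a set \<Rightarrow> bool" where
  "independent V adj I \<longleftrightarrow> I \<subseteq> V \<and> (\<forall>u\<in>I. \<forall>v\<in>I. \<not> adj u v)"

text \<open>gamma_gr(G, I): maximum length of a legal dominating sequence S with I_S = I;
  the supremum of the empty set in ereal is -\<infinity>.\<close>
definition gamma_gr :: "'a set \<Rightarrow> ('a \<Rightarrow> 'a \<Rightarrow> bool) \<Rightarrow> 'a set \<Rightarrow> ereal" where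
  "gamma_gr V adj I = Sup {ereal (real (length S)) | S. legal_dom_seq V adj S \<and> I_seq V adj S = I}"

end

theory Submission
  imports Defs
begin
lemma PN_mem: "x \<in> PN V adj S i \<longleftrightarrow> x \<in> closed_nbhd V adj (S!i) \<and> (\<forall>j<i. x \<notin> closed_nbhd V adj (S!j))"
  by (auto simp: PN_def)

lemma nbhd_sub: "closed_nbhd V adj v \<subseteq> V" by (auto simp: closed_nbhd_def)

lemma fp_eq:
  assumes "i < length S" "x \<in> closed_nbhd V adj (S!i)" "\<forall>j<i. x \<notin> closed_nbhd V adj (S!j)"
  shows "footprinter V adj S x = S!i"
proof -
  have "(THE i'. i' < length S \<and> x \<in> PN V adj S i') = i"
  proof (rule the_equality)
    show "i < length S \<and> x \<in> PN V adj S i" using assms by (simp add: PN_mem)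
  next
    fix i' assume h: "i' < length S \<and> x \<in> PN V adj S i'"
    show "i' = i"
    proof (rule ccontr)
      assume "i' \<noteq> i"
      then consider "i' < i" | "i < i'" by linarith
      then show False using h assms by cases (auto simp: PN_mem)
    qed
  qed
  then show ?thesis by (simp add: footprinter_def)
qed

lemma fp_exists:
  assumes "dominating V adj (set S)" "x \<in> V"
  shows "\<exists>i<length S. x \<in> closed_nbhd V adj (S!i) \<and> (\<forall>j<i. x \<notin> closed_nbhd V adj (S!j))
          \<and> footprinter V adj S x = S!i"
proof -
  obtain d where d: "d \<in> set S" "x \<in> closed_nbhd V adj d" using assms by (auto simp: dominating_def)
  then obtain k where k: "k < length S" "S!k = d" by (auto simp: in_set_conv_nth)
  define i where "i = (LEAST i. x \<in> closed_nbhd V adj (S!i))"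
  have 1: "x \<in> closed_nbhd V adj (S!i)" unfolding i_def by (rule LeastI[of _ k]) (use d k in simp)
  have 2: "i \<le> k" unfolding i_def by (rule Least_le) (use d k in simp)
  have 3: "\<forall>j<i. x \<notin> closed_nbhd V adj (S!j)" unfolding i_def using not_less_Least by blast
  show ?thesis using 1 2 3 k fp_eq[of i S x V adj] by (intro exI[of _ i]) auto
qed

lemma I_mem:
  assumes "legal_dom_seq V adj S"
  shows "v \<in> I_seq V adj S \<longleftrightarrow> (\<exists>i<length S. S!i = v \<and> (\<forall>j<i. v \<notin> closed_nbhd V adj (S!j)))"
proof
  assume "v \<in> I_seq V adj S"
  then have v: "v \<in> V" "footprinter V adj S v = v" by (auto simp: I_seq_def)
  have dom: "dominating V adj (set S)" using assms by (simp add: legal_dom_seq_def)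
  from fp_exists[OF dom v(1)] v(2) show "\<exists>i<length S. S!i = v \<and> (\<forall>j<i. v \<notin> closed_nbhd V adj (S!j))"
    by auto
next
  assume "\<exists>i<length S. S!i = v \<and> (\<forall>j<i. v \<notin> closed_nbhd V adj (S!j))"
  then obtain i where i: "i < length S" "S!i = v" "\<forall>j<i. v \<notin> closed_nbhd V adj (S!j)" by blast
  have "v \<in> V" using assms i by (auto simp: legal_dom_seq_def dominating_def)
  then have "v \<in> closed_nbhd V adj (S!i)" using i by (simp add: closed_nbhd_def)
  then have "footprinter V adj S v = v" using fp_eq[OF i(1) _ i(3)] i(2) by simp
  then show "v \<in> I_seq V adj S" using \<open>v \<in> V\<close> by (simp add: I_seq_def)
qed

lemma no_early:
  assumes "legal_dom_seq V adj S" "A \<inter> I_seq V adj S = {}"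
    and hyp: "\<And>j y. j < T \<Longrightarrow> j < length S \<Longrightarrow> S!j \<notin> A \<Longrightarrow> y \<in> A \<Longrightarrow> y \<notin> closed_nbhd V adj (S!j)"
  shows "j < T \<Longrightarrow> j < length S \<Longrightarrow> S!j \<notin> A"
proof (induction j rule: less_induct)
  case (less j)
  show ?case
  proof
    assume jA: "S!j \<in> A"
    then have "S!j \<notin> I_seq V adj S" using assms(2) by blast
    then obtain j' where j': "j' < j" "S!j \<in> closed_nbhd V adj (S!j')"
      using I_mem[OF assms(1), of "S!j"] less.prems by blast
    have "S!j' \<notin> A" using less.IH[of j'] j' less.prems by simp
    then show False using hyp[of j' "S!j"] j' less.prems jA by simp
  qed
qed

lemma fp_first:
  assumes "legal_dom_seq V adj S" "A \<inter> I_seq V adj S = {}"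
    and hyp: "\<And>j y. j < i \<Longrightarrow> S!j \<notin> A \<Longrightarrow> y \<in> A \<Longrightarrow> y \<notin> closed_nbhd V adj (S!j)"
    and "i < length S" "x \<in> closed_nbhd V adj (S!i)" "x \<in> A"
  shows "footprinter V adj S x = S!i"
proof (rule fp_eq[OF assms(4,5)], intro allI impI)
  fix j assume "j < i"
  then have "S!j \<notin> A" using no_early[OF assms(1,2), of i j] hyp assms(4) by auto
  then show "x \<notin> closed_nbhd V adj (S!j)" using hyp \<open>j < i\<close> assms(6) by blast
qed

lemma PN_disj: assumes "i \<noteq> j" shows "PN V adj S i \<inter> PN V adj S j = {}"
proof -
  have "x \<notin> PN V adj S i \<or> x \<notin> PN V adj S j" for x
  proof (cases "i < j")
    case True then show ?thesis unfolding PN_mem by blast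
  next
    case False then have "j < i" using assms by simp
    then show ?thesis unfolding PN_mem by blast
  qed
  then show ?thesis by blast
qed

lemma len_card:
  assumes "legal_dom_seq V adj S" "finite V"
  shows "card V = (\<Sum>i<length S. card (PN V adj S i))"
proof -
  have dom: "dominating V adj (set S)" using assms by (simp add: legal_dom_seq_def)
  have eqV: "V = (\<Union>i<length S. PN V adj S i)"
  proof
    show "V \<subseteq> (\<Union>i<length S. PN V adj S i)"
    proof
      fix x assume "x \<in> V"
      then obtain i where "i < length S" "x \<in> closed_nbhd V adj (S!i)" "\<forall>j<i. x \<notin> closed_nbhd V adj (S!j)"
        using fp_exists[OF dom] by blast
      then have "x \<in> PN V adj S i" by (simp add: PN_mem)
      then show "x \<in> (\<Union>i<length S. PN V adj S i)" using \<open>i < length S\<close> by auto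
    qed
    show "(\<Union>i<length S. PN V adj S i) \<subseteq> V" by (auto simp: PN_def closed_nbhd_def)
  qed
  have eqC: "card (\<Union>i<length S. PN V adj S i) = (\<Sum>i<length S. card (PN V adj S i))"
  proof (rule card_UN_disjoint)
    show "\<forall>i\<in>{..<length S}. finite (PN V adj S i)"
    proof
      fix i show "finite (PN V adj S i)"
        by (rule finite_subset[OF _ assms(2)]) (use nbhd_sub[of V adj] in \<open>auto simp: PN_def\<close>)
    qed
    show "\<forall>i\<in>{..<length S}. \<forall>j\<in>{..<length S}. i \<noteq> j \<longrightarrow> PN V adj S i \<inter> PN V adj S j = {}"
      by (intro ballI impI PN_disj)
  qed simp
  have "card V = card (\<Union>i<length S. PN V adj S i)" using eqV by (rule arg_cong)
  then show ?thesis using eqC by (rule trans)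
qed

abbreviation "NB n m v \<equiv> closed_nbhd (path_pow_V n) (path_pow_adj n m) v"
abbreviation "FP n m S x \<equiv> footprinter (path_pow_V n) (path_pow_adj n m) S x"
abbreviation "LG n m S \<equiv> legal_dom_seq (path_pow_V n) (path_pow_adj n m) S"
abbreviation "IS n m S \<equiv> I_seq (path_pow_V n) (path_pow_adj n m) S"

lemma nb: "u \<in> NB n m v \<longleftrightarrow> u \<in> {1..n} \<and> v \<in> {1..n} \<and> u \<le> v + m \<and> v \<le> u + m"
  by (auto simp: closed_nbhd_def path_pow_V_def path_pow_adj_def split: if_splits)

lemma indep_gap:
  assumes "independent (path_pow_V n) (path_pow_adj n m) I" "a \<in> I" "b \<in> I" "a < b"
  shows "a + m < b"
proof -
  have "a \<in> {1..n}" "b \<in> {1..n}" using assms by (auto simp: independent_def path_pow_V_def)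
  moreover have "\<not> path_pow_adj n m a b" using assms by (auto simp: independent_def)
  ultimately show ?thesis using assms(4) by (auto simp: path_pow_adj_def)
qed

lemma IS_sub: "IS n m S \<subseteq> {1..n}" by (auto simp: I_seq_def path_pow_V_def)

lemma gap_fp:
  assumes L: "LG n m S" and I: "I = IS n m S" and ab: "a \<in> I" "b \<in> I" "a < b" "a + m < b"
    and cons: "\<forall>c\<in>I. \<not> (a < c \<and> c < b)"
  shows "(\<forall>x. a < x \<and> x \<le> a + m \<longrightarrow> FP n m S x = a) \<or> (\<forall>x. b - m \<le> x \<and> x < b \<longrightarrow> FP n m S x = b)"
proof -
  obtain ia where ia: "ia < length S" "S!ia = a" "\<forall>j<ia. a \<notin> NB n m (S!j)"
    using ab(1) I I_mem[OF L] by blast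
  obtain ib where ib: "ib < length S" "S!ib = b" "\<forall>j<ib. b \<notin> NB n m (S!j)"
    using ab(2) I I_mem[OF L] by blast
  have dist: "distinct S" using L by (simp add: legal_dom_seq_def)
  have aV: "a \<in> {1..n}" "b \<in> {1..n}" using ab I IS_sub[of n m S] by auto
  have "ia \<noteq> ib" using ia ib ab by auto
  define A where "A = {a<..<b}"
  have AI: "A \<inter> IS n m S = {}" using cons I by (auto simp: A_def)
  have hyp: "y \<notin> NB n m (S!j)" if h: "j < ia" "j < ib" "S!j \<notin> A" "y \<in> A" for j y
  proof
    assume y: "y \<in> NB n m (S!j)"
    have jl: "j < length S" using h ia by simp
    have "S!j \<noteq> a" using dist jl ia h by (metis nth_eq_iff_index_eq less_irrefl)
    moreover have "S!j \<noteq> b" using dist jl ib h by (metis nth_eq_iff_index_eq less_irrefl)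
    ultimately consider "S!j < a" | "S!j > b" using h(3) by (force simp: A_def)
    then show False
    proof cases
      case 1
      then have "a \<in> NB n m (S!j)" using y h(4) aV by (auto simp: nb A_def)
      then show False using ia h by blast
    next
      case 2
      then have "b \<in> NB n m (S!j)" using y h(4) aV by (auto simp: nb A_def)
      then show False using ib h by blast
    qed
  qed
  show ?thesis
  proof (cases "ia < ib")
    case True
    have "FP n m S x = a" if "a < x" "x \<le> a + m" for x
      using fp_first[OF L AI _ ia(1), of x] hyp True that aV ia(2) ab
      by (auto simp: nb A_def)
    then show ?thesis by blast
  next
    case False
    then have lt: "ib < ia" using \<open>ia \<noteq> ib\<close> by simp
    have "FP n m S x = b" if "b - m \<le> x" "x < b" for x
    proof -
      have x1: "1 \<le> x" "b \<le> x + m" "x \<le> n" "a < x" "x < b" using that aV ab by auto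
      have "x \<in> NB n m (S!ib)" using x1 aV ib(2) by (auto simp: nb)
      moreover have "x \<in> A" using x1 that by (simp add: A_def)
      ultimately show ?thesis using fp_first[OF L AI _ ib(1), of x] hyp lt ib(2) by auto
    qed
    then show ?thesis by blast
  qed
qed

lemma left_fp:
  assumes L: "LG n m S" and I: "I = IS n m S" "I \<noteq> {}" and mn: "Min I \<le> m + 1"
    and x: "1 \<le> x" "x < Min I"
  shows "FP n m S x = Min I"
proof -
  have fin: "finite I" using I IS_sub[of n m S] finite_subset[OF _ finite_atLeastAtMost] by metis
  have a0: "Min I \<in> I" using fin I by simp
  obtain ia where ia: "ia < length S" "S!ia = Min I" "\<forall>j<ia. Min I \<notin> NB n m (S!j)"
    using a0 I I_mem[OF L] by blast
  have dist: "distinct S" using L by (simp add: legal_dom_seq_def)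
  have aV: "Min I \<in> {1..n}" using a0 I IS_sub[of n m S] by auto
  define A where "A = {..<Min I}"
  have "\<forall>x\<in>I. Min I \<le> x" using fin by simp
  then have AI: "A \<inter> IS n m S = {}" unfolding A_def I(1)[symmetric] by auto
  have hyp: "y \<notin> NB n m (S!j)" if "j < ia" "S!j \<notin> A" "y \<in> A" for j y
  proof
    assume y: "y \<in> NB n m (S!j)"
    have jl: "j < length S" using that ia by simp
    have "S!j \<noteq> Min I" using dist jl ia that by (metis nth_eq_iff_index_eq less_irrefl)
    then have "S!j > Min I" using that(2) by (auto simp: A_def)
    then have "Min I \<in> NB n m (S!j)" using y that(3) aV by (auto simp: nb A_def)
    then show False using ia that by blast
  qed
  show ?thesis
    using fp_first[OF L AI hyp ia(1), of x] x aV ia(2) mn by (auto simp: nb A_def)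
qed

lemma right_fp:
  assumes L: "LG n m S" and I: "I = IS n m S" "I \<noteq> {}" and mx: "n \<le> Max I + m"
    and x: "x \<le> n" "Max I < x"
  shows "FP n m S x = Max I"
proof -
  have fin: "finite I" using I IS_sub[of n m S] finite_subset[OF _ finite_atLeastAtMost] by metis
  have a0: "Max I \<in> I" using fin I by simp
  obtain ia where ia: "ia < length S" "S!ia = Max I" "\<forall>j<ia. Max I \<notin> NB n m (S!j)"
    using a0 I I_mem[OF L] by blast
  have dist: "distinct S" using L by (simp add: legal_dom_seq_def)
  have aV: "Max I \<in> {1..n}" using a0 I IS_sub[of n m S] by auto
  define A where "A = {Max I<..}"
  have "\<forall>x\<in>I. x \<le> Max I" using fin by simp
  then have AI: "A \<inter> IS n m S = {}" unfolding A_def I(1)[symmetric] by auto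
  have hyp: "y \<notin> NB n m (S!j)" if "j < ia" "S!j \<notin> A" "y \<in> A" for j y
  proof
    assume y: "y \<in> NB n m (S!j)"
    have jl: "j < length S" using that ia by simp
    have "S!j \<noteq> Max I" using dist jl ia that by (metis nth_eq_iff_index_eq less_irrefl)
    then have "S!j < Max I" using that(2) by (auto simp: A_def)
    then have "Max I \<in> NB n m (S!j)" using y that(3) aV by (auto simp: nb A_def)
    then show False using ia that by blast
  qed
  show ?thesis
    using fp_first[OF L AI hyp ia(1), of x] x aV ia(2) mx by (auto simp: nb A_def)
qed

lemma comb_aux:
  fixes I :: "nat set"
  shows "card I = k \<Longrightarrow> finite I \<Longrightarrow> I \<noteq> {} \<Longrightarrow> B \<subseteq> {Min I..Max I} - I \<Longrightarrow>
    (\<forall>a\<in>I. \<forall>b\<in>I. a < b \<and> (\<forall>c\<in>I. \<not> (a < c \<and> c < b)) \<longrightarrow> card (B \<inter> {a<..<b}) + m + 1 \<le> b - a) \<Longrightarrow>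
    card B + card I + (card I - 1) * m \<le> Max I + 1 - Min I"
proof (induction k arbitrary: I B)
  case 0 then show ?case by simp
next
  case (Suc k)
  show ?case
  proof (cases "k = 0")
    case True
    then obtain a where Ia: "I = {a}" using Suc.prems(1) card_1_singletonE by auto
    then have "B = {}" using Suc.prems(4) by auto
    then show ?thesis using Ia by simp
  next
    case False
    define b where "b = Max I"
    define I' where "I' = I - {b}"
    have bI: "b \<in> I" using Suc.prems b_def by simp
    have cI': "card I' = k" using Suc.prems(1,2) bI by (simp add: I'_def)
    have finI': "finite I'" using Suc.prems(2) by (simp add: I'_def)
    have neI': "I' \<noteq> {}" using cI' False by auto
    define a where "a = Max I'"
    have aI': "a \<in> I'" using finI' neI' a_def by simp
    have lb: "c < b" if "c \<in> I'" for c
      using that Suc.prems(2) by (auto simp: I'_def b_def) (metis Max_ge le_neq_implies_less)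
    have ab: "a < b" using lb aI' by simp
    have aI: "a \<in> I" using aI' by (simp add: I'_def)
    have minI: "Min I' = Min I"
    proof -
      obtain c where c: "c \<in> I'" using neI' by blast
      have "Min I \<le> c" using c Suc.prems(2) by (simp add: I'_def)
      then have "Min I \<in> I'" using lb[OF c] Suc.prems(2,3) by (simp add: I'_def b_def)
      moreover have "Min I \<le> Min I'" using Min_antimono[of I' I] neI' Suc.prems(2) by (auto simp: I'_def)
      ultimately show ?thesis using finI' by (meson Min_le antisym)
    qed
    define B' where "B' = B \<inter> {..a}"
    have B'sub: "B' \<subseteq> {Min I'..Max I'} - I'"
    proof
      fix x assume "x \<in> B'"
      then have "x \<in> B" "x \<le> a" by (auto simp: B'_def)
      then show "x \<in> {Min I'..Max I'} - I'" using Suc.prems(4) minI a_def by (auto simp: I'_def)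
    qed
    have gap': "\<forall>a'\<in>I'. \<forall>b'\<in>I'. a' < b' \<and> (\<forall>c\<in>I'. \<not> (a' < c \<and> c < b')) \<longrightarrow>
        card (B' \<inter> {a'<..<b'}) + m + 1 \<le> b' - a'"
    proof (intro ballI impI)
      fix a' b' assume h: "a' \<in> I'" "b' \<in> I'" "a' < b' \<and> (\<forall>c\<in>I'. \<not> (a' < c \<and> c < b'))"
      have "b' < b" using lb h by simp
      then have "\<forall>c\<in>I. \<not> (a' < c \<and> c < b')" using h by (auto simp: I'_def)
      then have "card (B \<inter> {a'<..<b'}) + m + 1 \<le> b' - a'" using Suc.prems(5) h by (auto simp: I'_def)
      moreover have "card (B' \<inter> {a'<..<b'}) \<le> card (B \<inter> {a'<..<b'})"
        by (rule card_mono) (auto simp: B'_def)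
      ultimately show "card (B' \<inter> {a'<..<b'}) + m + 1 \<le> b' - a'" by simp
    qed
    have IH: "card B' + card I' + (card I' - 1) * m \<le> Max I' + 1 - Min I'"
      using Suc.IH[OF cI' finI' neI' B'sub gap'] .
    have consab: "\<forall>c\<in>I. \<not> (a < c \<and> c < b)"
    proof (intro ballI notI)
      fix c assume "c \<in> I" "a < c \<and> c < b"
      then have "c \<in> I'" by (auto simp: I'_def)
      then have "c \<le> a" using finI' a_def by simp
      then show False using \<open>a < c \<and> c < b\<close> by simp
    qed
    have gab: "card (B \<inter> {a<..<b}) + m + 1 \<le> b - a" using Suc.prems(5) aI bI ab consab by blast
    have finB: "finite B" using Suc.prems(4) finite_subset[OF _ finite_atLeastAtMost] by (metis Diff_subset order_trans)
    have Bsplit: "B = B' \<union> (B \<inter> {a<..<b})"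
    proof -
      have h: "x \<le> a \<or> (a < x \<and> x < b)" if "x \<in> B" for x
      proof -
        have "x \<le> b" "x \<noteq> b" using that Suc.prems(4) bI by (auto simp: b_def)
        then show ?thesis by auto
      qed
      show ?thesis
      proof (rule set_eqI)
        fix x show "x \<in> B \<longleftrightarrow> x \<in> B' \<union> (B \<inter> {a<..<b})"
          using h[of x] by (auto simp: B'_def)
      qed
    qed
    have cB: "card B = card B' + card (B \<inter> {a<..<b})"
      by (subst Bsplit, rule card_Un_disjoint) (use finB in \<open>auto simp: B'_def\<close>)
    have cI: "card I = k + 1" using Suc.prems(1) by simp
    obtain k' where k': "k = Suc k'" using False not0_implies_Suc by blast
    have minle: "Min I \<le> a" using aI Suc.prems(2) by simp
    have "Max I' = a" by (simp add: a_def)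
    then have IH': "card B' + (k' + 1) + k' * m \<le> a + 1 - Min I" using IH minI cI' k' by simp
    have "card I - 1 = k' + 1" using cI k' by simp
    then have "(card I - 1) * m = k' * m + m" by simp
    then show ?thesis using IH' gab cB cI k' minle ab unfolding b_def[symmetric]
      by linarith
  qed
qed

lemma upper:
  assumes L: "LG n m S" and I: "I = IS n m S" "I \<noteq> {}"
    and ind: "independent (path_pow_V n) (path_pow_adj n m) I"
    and mn: "Min I \<le> m + 1" and mx: "n \<le> Max I + m"
  shows "length S + (card I - 1) * m \<le> Max I + 1 - Min I"
proof -
  have finI: "finite I" using I IS_sub[of n m S] finite_subset[OF _ finite_atLeastAtMost] by metis
  define B where "B = {x \<in> {1..n}. FP n m S x \<notin> I}"
  have dist: "distinct S" using L by (simp add: legal_dom_seq_def)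
  have IS: "I \<subseteq> set S" using I I_mem[OF L] by (force simp: in_set_conv_nth)
  have SB: "set S - I \<subseteq> FP n m S ` B"
  proof
    fix s assume s: "s \<in> set S - I"
    then obtain i where i: "i < length S" "S!i = s" by (auto simp: in_set_conv_nth)
    then obtain x where x: "x \<in> PN (path_pow_V n) (path_pow_adj n m) S i"
      using L by (auto simp: legal_dom_seq_def)
    have "FP n m S x = s" using fp_eq[OF i(1)] x i(2) by (simp add: PN_mem)
    moreover have "x \<in> {1..n}" using x by (auto simp: PN_mem nb)
    ultimately show "s \<in> FP n m S ` B" using s by (auto simp: B_def)
  qed
  have finB: "finite B" by (simp add: B_def)
  have c1: "length S = card I + card (set S - I)"
    using IS distinct_card[OF dist] card_Diff_subset[OF finI IS] card_mono[OF _ IS] by simp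
  have c2: "card (set S - I) \<le> card B"
    using le_trans[OF card_mono[OF finite_imageI[OF finB] SB] card_image_le[OF finB]] .
  have Bsub: "B \<subseteq> {Min I..Max I} - I"
  proof
    fix x assume x: "x \<in> B"
    then have x1: "x \<in> {1..n}" "FP n m S x \<notin> I" by (auto simp: B_def)
    have mm: "Min I \<in> I" "Max I \<in> I" using finI I(2) by auto
    have "\<not> x < Min I"
    proof
      assume "x < Min I"
      then have "FP n m S x = Min I" using left_fp[OF L I mn, of x] x1 by auto
      then show False using x1 mm by simp
    qed
    moreover have "\<not> x > Max I"
    proof
      assume "x > Max I"
      then have "FP n m S x = Max I" using right_fp[OF L I mx, of x] x1 by auto
      then show False using x1 mm by simp
    qed
    moreover have "x \<notin> I" using x1 I by (auto simp: I_seq_def)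
    ultimately show "x \<in> {Min I..Max I} - I" by auto
  qed
  have gaps: "\<forall>a\<in>I. \<forall>b\<in>I. a < b \<and> (\<forall>c\<in>I. \<not> (a < c \<and> c < b)) \<longrightarrow> card (B \<inter> {a<..<b}) + m + 1 \<le> b - a"
  proof (intro ballI impI)
    fix a b assume h: "a \<in> I" "b \<in> I" "a < b \<and> (\<forall>c\<in>I. \<not> (a < c \<and> c < b))"
    have amb: "a + m < b" using indep_gap[OF ind h(1,2)] h by simp
    from gap_fp[OF L I(1) h(1,2) _ amb] h
    consider "\<forall>x. a < x \<and> x \<le> a + m \<longrightarrow> FP n m S x = a" | "\<forall>x. b - m \<le> x \<and> x < b \<longrightarrow> FP n m S x = b"
      by blast
    then show "card (B \<inter> {a<..<b}) + m + 1 \<le> b - a"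
    proof cases
      case 1
      have "B \<inter> {a<..<b} \<subseteq> {a+m<..<b}" using 1 h by (auto simp: B_def)
      from card_mono[OF _ this] show ?thesis using amb by simp
    next
      case 2
      have "B \<inter> {a<..<b} \<subseteq> {a<..<b-m}"
      proof
        fix x assume x: "x \<in> B \<inter> {a<..<b}"
        have "x < b - m"
        proof (rule ccontr)
          assume "\<not> x < b - m"
          then have "FP n m S x = b" using 2 x by auto
          then show False using x h by (auto simp: B_def)
        qed
        then show "x \<in> {a<..<b-m}" using x by auto
      qed
      from card_mono[OF _ this] show ?thesis using amb by simp
    qed
  qed
  have "card B + card I + (card I - 1) * m \<le> Max I + 1 - Min I"
    using comb_aux[OF refl finI I(2) Bsub gaps] .
  then show ?thesis using c1 c2 by linarith
qed

lemma pred_close: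
  fixes X :: "nat set"
  assumes fin: "finite X" and P2: "\<forall>x\<in>X. x < Max X \<longrightarrow> (\<exists>y\<in>X. x < y \<and> y \<le> x + m + 1)"
    and y: "y \<in> X" "y \<noteq> Min X"
  shows "\<exists>p\<in>X. p < y \<and> y \<le> p + m + 1 \<and> (\<forall>x\<in>X. x < y \<longrightarrow> x \<le> p)"
proof -
  define P where "P = {x\<in>X. x < y}"
  have "Min X \<in> X" using fin y by (metis Min_in empty_iff)
  moreover have "Min X \<le> y" using fin y by simp
  ultimately have "Min X \<in> P" using y by (auto simp: P_def)
  then have Pne: "P \<noteq> {}" and finP: "finite P" using fin by (auto simp: P_def)
  define p where "p = Max P"
  have pP: "p \<in> P" using Pne finP p_def by simp
  have pmax: "\<forall>x\<in>X. x < y \<longrightarrow> x \<le> p" using finP by (auto simp: p_def P_def)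
  have "p < Max X" using pP y fin by (auto simp: P_def) (meson Max_ge less_le_trans)
  then obtain s where s: "s \<in> X" "p < s" "s \<le> p + m + 1" using P2 pP by (auto simp: P_def)
  have "y \<le> s" using pmax s by (meson leD leI)
  then show ?thesis using pP pmax s by (auto simp: P_def)
qed

lemma constr:
  fixes X :: "nat set"
  assumes Xs: "X \<subseteq> {1..n}" and Xne: "X \<noteq> {}" and P1: "Min X \<le> m + 1" "n \<le> Max X + m"
    and P2: "\<forall>x\<in>X. x < Max X \<longrightarrow> (\<exists>y\<in>X. x < y \<and> y \<le> x + m + 1)"
    and P3: "\<forall>x\<in>X. x < Max X \<longrightarrow> x + m < n"
  shows "LG n m (sorted_list_of_set X) \<and> IS n m (sorted_list_of_set X) = {z\<in>X. \<forall>y\<in>X. y < z \<longrightarrow> y + m < z}"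
proof -
  define S where "S = sorted_list_of_set X"
  have fin: "finite X" using Xs finite_subset[OF _ finite_atLeastAtMost] by metis
  have setS: "set S = X" and dist: "distinct S" and ss: "sorted_wrt (<) S"
    using fin by (auto simp: S_def strict_sorted_list_of_set)
  have ord: "S!j < S!i \<longleftrightarrow> j < i" if "i < length S" "j < length S" for i j
    using sorted_wrt_nth_less[OF ss, of j i] sorted_wrt_nth_less[OF ss, of i j] that
    by (metis less_asym' linorder_neqE_nat)
  have earlier: "(\<forall>j<i. P (S!j)) \<longleftrightarrow> (\<forall>y\<in>X. y < S!i \<longrightarrow> P y)" if "i < length S" for i P
  proof
    assume h: "\<forall>j<i. P (S!j)"
    show "\<forall>y\<in>X. y < S!i \<longrightarrow> P y"
    proof (intro ballI impI)
      fix y assume "y \<in> X" "y < S!i"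
      then obtain j where "j < length S" "S!j = y" using setS by (auto simp: in_set_conv_nth)
      then show "P y" using h ord[OF that] \<open>y < S!i\<close> by auto
    qed
  next
    assume h: "\<forall>y\<in>X. y < S!i \<longrightarrow> P y"
    show "\<forall>j<i. P (S!j)"
    proof (intro allI impI)
      fix j assume "j < i"
      then have "S!j \<in> X" "S!j < S!i" using that ord setS by (auto)
      then show "P (S!j)" using h by blast
    qed
  qed
  have SiX: "S!i \<in> X" if "i < length S" for i using that setS by auto
  have dom: "dominating (path_pow_V n) (path_pow_adj n m) (set S)"
    unfolding dominating_def
  proof (intro conjI ballI)
    show "set S \<subseteq> path_pow_V n" using setS Xs by (simp add: path_pow_V_def)
    fix z assume z: "z \<in> path_pow_V n"
    then have z1: "1 \<le> z" "z \<le> n" by (auto simp: path_pow_V_def)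
    define Y where "Y = {y\<in>X. z \<le> y + m}"
    have "Max X \<in> Y" using fin Xne z1 P1 by (auto simp: Y_def)
    then have Yne: "Y \<noteq> {}" and finY: "finite Y" using fin by (auto simp: Y_def)
    define y where "y = Min Y"
    have yY: "y \<in> Y" using Yne finY y_def by simp
    have ymin: "\<forall>x\<in>Y. y \<le> x" using finY y_def by simp
    have yV: "y \<in> {1..n}" using yY Xs by (auto simp: Y_def)
    have "y \<le> z + m"
    proof (cases "y = Min X")
      case True then show ?thesis using P1 z1 by simp
    next
      case False
      obtain p where p: "p \<in> X" "p < y" "y \<le> p + m + 1" using pred_close[OF fin P2 _ False] yY by (auto simp: Y_def)
      have "p \<notin> Y" using ymin p by auto
      then show ?thesis using p by (auto simp: Y_def)
    qed
    then have "z \<in> NB n m y" using yY yV z1 by (auto simp: nb Y_def)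
    then show "\<exists>d\<in>set S. z \<in> closed_nbhd (path_pow_V n) (path_pow_adj n m) d" using yY setS by (auto simp: Y_def)
  qed
  have PNne: "PN (path_pow_V n) (path_pow_adj n m) S i \<noteq> {}" if i: "i < length S" for i
  proof (cases "S!i = Min X")
    case True
    have vV: "S!i \<in> {1..n}" using SiX[OF i] Xs by auto
    have "\<forall>y\<in>X. y < S!i \<longrightarrow> S!i \<notin> NB n m y" using True Min_le[OF fin] by (metis leD)
    then have "\<forall>j<i. S!i \<notin> NB n m (S!j)" using earlier[OF i, of "\<lambda>y. S!i \<notin> NB n m y"] by simp
    then have "S!i \<in> PN (path_pow_V n) (path_pow_adj n m) S i"
      using vV by (auto simp: PN_mem nb)
    then show ?thesis by blast
  next
    case False
    obtain p where p: "p \<in> X" "p < S!i" "S!i \<le> p + m + 1" "\<forall>x\<in>X. x < S!i \<longrightarrow> x \<le> p"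
      using pred_close[OF fin P2 SiX[OF i] False] by blast
    have "p < Max X" using p SiX[OF i] fin by (meson Max_ge less_le_trans)
    then have pn: "p + m < n" using P3 p by blast
    have pV: "p \<in> {1..n}" using p Xs by auto
    have vV: "S!i \<in> {1..n}" using SiX[OF i] Xs by auto
    have "\<forall>y\<in>X. y < S!i \<longrightarrow> p + m + 1 \<notin> NB n m y" using p by (auto simp: nb)
    then have "\<forall>j<i. p + m + 1 \<notin> NB n m (S!j)" using earlier[OF i, of "\<lambda>y. p + m + 1 \<notin> NB n m y"] by simp
    then have "p + m + 1 \<in> PN (path_pow_V n) (path_pow_adj n m) S i"
      using vV pV pn p by (auto simp: PN_mem nb)
    then show ?thesis by blast
  qed
  have L: "LG n m S" using dist dom PNne by (simp add: legal_dom_seq_def)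
  have "IS n m S = {z\<in>X. \<forall>y\<in>X. y < z \<longrightarrow> y + m < z}"
  proof (rule set_eqI)
    fix z
    have e: "(\<forall>j<i. z \<notin> NB n m (S!j)) = (\<forall>y\<in>X. y < S!i \<longrightarrow> z \<notin> NB n m y)" if "i < length S" for i
      using earlier[OF that, of "\<lambda>y. z \<notin> NB n m y"] by simp
    have "z \<in> IS n m S \<longleftrightarrow> (\<exists>i<length S. S!i = z \<and> (\<forall>y\<in>X. y < S!i \<longrightarrow> z \<notin> NB n m y))"
    proof -
      have "z \<in> IS n m S \<longleftrightarrow> (\<exists>i<length S. S!i = z \<and> (\<forall>j<i. z \<notin> NB n m (S!j)))"
        by (rule I_mem[OF L])
      also have "\<dots> \<longleftrightarrow> (\<exists>i<length S. S!i = z \<and> (\<forall>y\<in>X. y < S!i \<longrightarrow> z \<notin> NB n m y))"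
      proof
        assume "\<exists>i<length S. S!i = z \<and> (\<forall>j<i. z \<notin> NB n m (S!j))"
        then obtain i where "i<length S" "S!i = z" "\<forall>j<i. z \<notin> NB n m (S!j)" by blast
        then show "\<exists>i<length S. S!i = z \<and> (\<forall>y\<in>X. y < S!i \<longrightarrow> z \<notin> NB n m y)" using e by blast
      next
        assume "\<exists>i<length S. S!i = z \<and> (\<forall>y\<in>X. y < S!i \<longrightarrow> z \<notin> NB n m y)"
        then obtain i where "i<length S" "S!i = z" "\<forall>y\<in>X. y < S!i \<longrightarrow> z \<notin> NB n m y" by blast
        then show "\<exists>i<length S. S!i = z \<and> (\<forall>j<i. z \<notin> NB n m (S!j))" using e by blast
      qed
      finally show ?thesis .
    qed
    also have "\<dots> \<longleftrightarrow> z \<in> X \<and> (\<forall>y\<in>X. y < z \<longrightarrow> z \<notin> NB n m y)"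
      using setS by (auto simp: in_set_conv_nth)
    also have "\<dots> \<longleftrightarrow> z \<in> X \<and> (\<forall>y\<in>X. y < z \<longrightarrow> y + m < z)"
    proof -
      have "z \<notin> NB n m y \<longleftrightarrow> y + m < z" if "z \<in> X" "y \<in> X" "y < z" for y
        using that Xs by (auto simp: nb subset_iff)
      then show ?thesis by blast
    qed
    finally show "z \<in> IS n m S \<longleftrightarrow> z \<in> {z\<in>X. \<forall>y\<in>X. y < z \<longrightarrow> y + m < z}" by simp
  qed
  then show ?thesis using L by (simp add: S_def)
qed

lemma nb_card:
  assumes v: "v \<in> {1..n}" and nm: "m + 1 \<le> n"
  shows "m + 1 \<le> card (NB n m v)"
proof -
  have fin: "finite (NB n m v)"
    by (rule finite_subset[OF _ finite_atLeastAtMost[of 1 n]]) (auto simp: nb)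
  show ?thesis
  proof (cases "v + m \<le> n")
    case True
    have "{v..v+m} \<subseteq> NB n m v" using True v by (auto simp: nb)
    from card_mono[OF fin this] show ?thesis by simp
  next
    case False
    have "{n-m..n} \<subseteq> NB n m v" using False v nm by (auto simp: nb)
    from card_mono[OF fin this] show ?thesis using nm by simp
  qed
qed

lemma len_bound:
  assumes L: "LG n m S" and nm: "m + 1 \<le> n"
  shows "length S + m \<le> n"
proof (cases S)
  case Nil then show ?thesis using nm by simp
next
  case (Cons s S')
  then obtain k where k: "length S = Suc k" by simp
  have c: "card {1..n} = (\<Sum>i<length S. card (PN (path_pow_V n) (path_pow_adj n m) S i))"
    using len_card[OF L] by (simp add: path_pow_V_def)
  have finPN: "finite (PN (path_pow_V n) (path_pow_adj n m) S i)" for i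
    by (rule finite_subset[OF _ finite_atLeastAtMost[of 1 n]]) (auto simp: PN_mem nb)
  have "S!0 \<in> set S" using k by simp
  then have s0: "S!0 \<in> {1..n}" using L
    by (auto simp: legal_dom_seq_def dominating_def path_pow_V_def)
  have "PN (path_pow_V n) (path_pow_adj n m) S 0 = NB n m (S!0)" by (simp add: PN_def)
  then have c0: "m + 1 \<le> card (PN (path_pow_V n) (path_pow_adj n m) S 0)" using nb_card[OF s0 nm] by simp
  have ci: "1 \<le> card (PN (path_pow_V n) (path_pow_adj n m) S (Suc i))" if "i < k" for i
  proof -
    have "PN (path_pow_V n) (path_pow_adj n m) S (Suc i) \<noteq> {}" using L k that by (auto simp: legal_dom_seq_def)
    then show ?thesis using finPN card_0_eq by (metis One_nat_def Suc_leI neq0_conv)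
  qed
  have "(\<Sum>i<length S. card (PN (path_pow_V n) (path_pow_adj n m) S i)) =
        card (PN (path_pow_V n) (path_pow_adj n m) S 0) + (\<Sum>i<k. card (PN (path_pow_V n) (path_pow_adj n m) S (Suc i)))"
    unfolding k by (rule sum.lessThan_Suc_shift)
  moreover have "(\<Sum>i<k. (1::nat)) \<le> (\<Sum>i<k. card (PN (path_pow_V n) (path_pow_adj n m) S (Suc i)))"
    by (rule sum_mono) (use ci in auto)
  ultimately show ?thesis using c c0 k by simp
qed

lemma lower:
  assumes ne: "I \<noteq> {}" and ind: "independent (path_pow_V n) (path_pow_adj n m) I"
    and mn: "Min I \<le> m + 1" and mx: "n \<le> Max I + m" and m1: "1 \<le> m"
  defines "X \<equiv> {x. Min I \<le> x \<and> x \<le> Max I \<and> (\<forall>b\<in>I. \<not> (x < b \<and> b \<le> x + m))}"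
  shows "LG n m (sorted_list_of_set X) \<and> IS n m (sorted_list_of_set X) = I
         \<and> card X + (card I - 1) * m = Max I + 1 - Min I"
proof -
  have IV: "I \<subseteq> {1..n}" using ind by (simp add: independent_def path_pow_V_def)
  have finI: "finite I" using IV finite_subset[OF _ finite_atLeastAtMost] by metis
  have minI: "Min I \<in> I" and maxI: "Max I \<in> I" using finI ne by auto
  have gap: "a + m < b" if "a \<in> I" "b \<in> I" "a < b" for a b using indep_gap[OF ind that] .
  have IX: "I \<subseteq> X"
  proof
    fix z assume z: "z \<in> I"
    have "\<not> (z < b \<and> b \<le> z + m)" if "b \<in> I" for b using gap[OF z that] by auto
    then show "z \<in> X" using z finI by (auto simp: X_def)
  qed
  have Xrange: "Min I \<le> x \<and> x \<le> Max I" if "x \<in> X" for x using that by (auto simp: X_def)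
  have XV: "X \<subseteq> {1..n}" using Xrange minI maxI IV by (force)
  have finX: "finite X" using XV finite_subset[OF _ finite_atLeastAtMost] by metis
  have Xne: "X \<noteq> {}" using IX ne by auto
  have minX: "Min X = Min I"
    by (rule antisym) (use IX minI finX Xrange Xne in \<open>auto\<close>)
  have maxX: "Max X = Max I"
    by (rule antisym) (use IX maxI finX Xrange Xne in \<open>auto\<close>)
  have P2: "\<forall>x\<in>X. x < Max X \<longrightarrow> (\<exists>y\<in>X. x < y \<and> y \<le> x + m + 1)"
  proof (intro ballI impI)
    fix x assume x: "x \<in> X" "x < Max X"
    show "\<exists>y\<in>X. x < y \<and> y \<le> x + m + 1"
    proof (cases "x + 1 \<in> X")
      case True then show ?thesis by force
    next
      case False
      have "Min I \<le> x" using Xrange[OF x(1)] by simp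
      then have "Min I \<le> x + 1" "x + 1 \<le> Max I" using x maxX by auto
      then obtain b where b: "b \<in> I" "x + 1 < b" "b \<le> x + 1 + m" using False by (auto simp: X_def)
      have "b = x + m + 1" using x(1) b by (auto simp: X_def)
      then have "x + m + 1 \<in> X" using b IX by auto
      then show ?thesis by (intro bexI[of _ "x + m + 1"]) auto
    qed
  qed
  have P3: "\<forall>x\<in>X. x < Max X \<longrightarrow> x + m < n"
  proof (intro ballI impI)
    fix x assume x: "x \<in> X" "x < Max X"
    then have "\<not> (Max I \<le> x + m)" using maxI maxX by (auto simp: X_def)
    then show "x + m < n" using maxI IV by auto
  qed
  have C: "LG n m (sorted_list_of_set X) \<and> IS n m (sorted_list_of_set X) = {z\<in>X. \<forall>y\<in>X. y < z \<longrightarrow> y + m < z}"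
    using constr[OF XV Xne _ _ P2 P3] minX maxX mn mx by simp
  have ISI: "{z\<in>X. \<forall>y\<in>X. y < z \<longrightarrow> y + m < z} = I"
  proof (rule set_eqI, rule iffI)
    fix z assume "z \<in> {z\<in>X. \<forall>y\<in>X. y < z \<longrightarrow> y + m < z}"
    then have z: "z \<in> X" "\<forall>y\<in>X. y < z \<longrightarrow> y + m < z" by auto
    show "z \<in> I"
    proof (rule ccontr)
      assume zI: "z \<notin> I"
      have "z \<noteq> Min I" using zI minI by auto
      then have lt: "Min I < z" using Xrange[OF z(1)] by simp
      have "z - 1 \<in> X"
      proof -
        have "\<not> (z - 1 < b \<and> b \<le> z - 1 + m)" if "b \<in> I" for b
        proof
          assume h: "z - 1 < b \<and> b \<le> z - 1 + m"
          then have "b \<noteq> z" using zI that by auto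
          then have "z < b \<and> b \<le> z + m" using h lt by auto
          then show False using z(1) that by (auto simp: X_def)
        qed
        then show ?thesis using lt Xrange[OF z(1)] by (auto simp: X_def)
      qed
      then show False using z(2) lt m1 by force
    qed
  next
    fix z assume z: "z \<in> I"
    have "y + m < z" if "y \<in> X" "y < z" for y
    proof (rule ccontr)
      assume "\<not> y + m < z"
      then show False using that z by (auto simp: X_def)
    qed
    then show "z \<in> {z\<in>X. \<forall>y\<in>X. y < z \<longrightarrow> y + m < z}" using z IX by auto
  qed
  define C where "C = (\<Union>b\<in>I - {Min I}. {b - m..<b})"
  have splitR: "{Min I..Max I} = X \<union> C"
  proof (rule set_eqI, rule iffI)
    fix x assume x: "x \<in> {Min I..Max I}"
    show "x \<in> X \<union> C"
    proof (cases "x \<in> X")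
      case False
      then obtain b where b: "b \<in> I" "x < b" "b \<le> x + m" using x by (auto simp: X_def)
      have "b \<noteq> Min I" using b x by auto
      then show ?thesis using b by (auto simp: C_def)
    qed simp
  next
    fix x assume "x \<in> X \<union> C"
    then show "x \<in> {Min I..Max I}"
    proof
      assume "x \<in> X" then show ?thesis using Xrange by auto
    next
      assume "x \<in> C"
      then obtain b where b: "b \<in> I" "b \<noteq> Min I" "b - m \<le> x" "x < b" by (auto simp: C_def)
      have "Min I < b" using b finI by (metis Min_le le_neq_implies_less)
      then have "Min I + m < b" using gap minI b by blast
      moreover have "b \<le> Max I" using b finI by simp
      ultimately show ?thesis using b by auto
    qed
  qed
  have XC: "X \<inter> C = {}"
  proof -
    have False if xx: "x \<in> X" "x \<in> C" for x
    proof -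
      obtain b where b: "b \<in> I" "b - m \<le> x" "x < b" using xx(2) by (auto simp: C_def)
      then show False using xx(1) by (auto simp: X_def)
    qed
    then show ?thesis by blast
  qed
  have cardC: "card C = (card I - 1) * m"
  proof -
    have "card C = (\<Sum>b\<in>I - {Min I}. card {b - m..<b})"
      unfolding C_def
    proof (rule card_UN_disjoint)
      show "finite (I - {Min I})" using finI by simp
      show "\<forall>i\<in>I - {Min I}. finite {i - m..<i}" by simp
      show "\<forall>i\<in>I - {Min I}. \<forall>j\<in>I - {Min I}. i \<noteq> j \<longrightarrow> {i - m..<i} \<inter> {j - m..<j} = {}"
      proof (intro ballI impI)
        fix i j assume ij: "i \<in> I - {Min I}" "j \<in> I - {Min I}" "i \<noteq> j"
        then consider "i < j" | "j < i" by linarith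
        then show "{i - m..<i} \<inter> {j - m..<j} = {}"
        proof cases
          case 1 then have "i + m < j" using gap ij by auto
          then show ?thesis by auto
        next
          case 2 then have "j + m < i" using gap ij by auto
          then show ?thesis by auto
        qed
      qed
    qed
    also have "\<dots> = (\<Sum>b\<in>I - {Min I}. m)"
    proof (rule sum.cong)
      fix b assume b: "b \<in> I - {Min I}"
      then have "Min I < b" using finI by (metis DiffD1 DiffD2 Min_le le_neq_implies_less singletonI)
      then have "Min I + m < b" using gap minI b by blast
      then show "card {b - m..<b} = m" by simp
    qed simp
    also have "\<dots> = (card I - 1) * m" using finI minI by simp
    finally show ?thesis .
  qed
  have finC: "finite C" using finI by (simp add: C_def)
  have "card {Min I..Max I} = card X + card C"
    unfolding splitR by (rule card_Un_disjoint[OF finX finC XC])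
  then have "card X + (card I - 1) * m = Max I + 1 - Min I" using cardC by simp
  then show ?thesis using C ISI by simp
qed

lemma gamma_tilde:
  assumes ne: "I \<noteq> {}" and ind: "independent (path_pow_V n) (path_pow_adj n m) I"
    and mn: "Min I \<le> m + 1" and mx: "n - m \<le> Max I" and m1: "1 \<le> m"
  shows "gamma_gr (path_pow_V n) (path_pow_adj n m) I =
            ereal (real (Max I) - real (Min I) + 1 - (real (card I) - 1) * real m)"
proof -
  have mx': "n \<le> Max I + m" using mx by simp
  define X where "X = {x. Min I \<le> x \<and> x \<le> Max I \<and> (\<forall>b\<in>I. \<not> (x < b \<and> b \<le> x + m))}"
  have lw: "LG n m (sorted_list_of_set X) \<and> IS n m (sorted_list_of_set X) = I
         \<and> card X + (card I - 1) * m = Max I + 1 - Min I"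
    using lower[OF ne ind mn mx' m1] unfolding X_def .
  have IV: "I \<subseteq> {1..n}" using ind by (simp add: independent_def path_pow_V_def)
  have finI: "finite I" using IV finite_subset[OF _ finite_atLeastAtMost] by metis
  have finX: "finite X"
    by (rule finite_subset[OF _ finite_atLeastAtMost[of "Min I" "Max I"]]) (auto simp: X_def)
  define G where "G = {ereal (real (length S)) | S. LG n m S \<and> IS n m S = I}"
  have ub: "g \<le> ereal (real (card X))" if gG: "g \<in> G" for g
  proof -
    obtain S where S: "g = ereal (real (length S))" "LG n m S" "IS n m S = I" using gG by (auto simp: G_def)
    have "length S + (card I - 1) * m \<le> Max I + 1 - Min I"
      using upper[OF S(2) S(3)[symmetric] ne _ mn mx'] ind S(3) by simp
    then have "length S \<le> card X" using lw by simp
    then show ?thesis using S(1) by simp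
  qed
  have mem: "ereal (real (card X)) \<in> G"
    unfolding G_def using lw finX by (auto intro!: exI[of _ "sorted_list_of_set X"])
  have "Sup G = ereal (real (card X))"
    by (rule antisym[OF Sup_least Sup_upper]) (use ub mem in auto)
  moreover have "real (card X) = real (Max I) - real (Min I) + 1 - (real (card I) - 1) * real m"
  proof -
    have c1: "1 \<le> card I" using finI ne by (simp add: Suc_le_eq card_gt_0_iff)
    have mm: "Min I \<le> Max I" using finI ne by simp
    have "real (card X + (card I - 1) * m) = real (Max I + 1 - Min I)" using lw by simp
    then show ?thesis using c1 mm by (simp add: of_nat_diff)
  qed
  ultimately show ?thesis by (simp add: gamma_gr_def G_def)
qed

theorem lemma6:
  fixes n m :: nat
  assumes "1 \<le> m" and "m + 2 \<le> n"
  defines "Itilde \<equiv> {I. I \<noteq> {} \<and> independent (path_pow_V n) (path_pow_adj n m) I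
                         \<and> Min I \<le> m + 1 \<and> Max I \<ge> n - m}"
  shows "(\<forall>I\<in>Itilde. gamma_gr (path_pow_V n) (path_pow_adj n m) I =
            ereal (real (Max I) - real (Min I) + 1 - (real (card I) - 1) * real m))
       \<and> (\<forall>I. I \<noteq> {} \<and> independent (path_pow_V n) (path_pow_adj n m) I \<longrightarrow>
            (\<exists>I'\<in>Itilde. gamma_gr (path_pow_V n) (path_pow_adj n m) I
                          \<le> gamma_gr (path_pow_V n) (path_pow_adj n m) I'))"
proof (intro conjI allI impI ballI)
  fix I assume "I \<in> Itilde"
  then show "gamma_gr (path_pow_V n) (path_pow_adj n m) I =
            ereal (real (Max I) - real (Min I) + 1 - (real (card I) - 1) * real m)"
    using gamma_tilde assms(1) by (auto simp: Itilde_def)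
next
  fix I assume I: "I \<noteq> {} \<and> independent (path_pow_V n) (path_pow_adj n m) I"
  define I' where "I' = {1, n}"
  have ind': "independent (path_pow_V n) (path_pow_adj n m) I'"
    using assms(2) by (auto simp: I'_def independent_def path_pow_V_def path_pow_adj_def)
  have mn': "Min I' = 1" "Max I' = n" using assms(2) by (auto simp: I'_def)
  have c': "card I' = 2" using assms(2) by (auto simp: I'_def)
  have I'T: "I' \<in> Itilde" using ind' mn' by (auto simp: Itilde_def I'_def)
  have gI': "gamma_gr (path_pow_V n) (path_pow_adj n m) I' = ereal (real n - real m)"
    using gamma_tilde[of I' n m] ind' mn' c' assms(1) by (simp add: I'_def)
  have "gamma_gr (path_pow_V n) (path_pow_adj n m) I \<le> ereal (real n - real m)"
    unfolding gamma_gr_def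
  proof (rule Sup_least)
    fix g assume "g \<in> {ereal (real (length S)) | S. LG n m S \<and> IS n m S = I}"
    then obtain S where S: "g = ereal (real (length S))" "LG n m S" by auto
    have "length S + m \<le> n" using len_bound[OF S(2)] assms(2) by simp
    then show "g \<le> ereal (real n - real m)" using S(1) by simp
  qed
  then show "\<exists>I'\<in>Itilde. gamma_gr (path_pow_V n) (path_pow_adj n m) I
                          \<le> gamma_gr (path_pow_V n) (path_pow_adj n m) I'"
    using \<open>gamma_gr (path_pow_V n) (path_pow_adj n m) I \<le> ereal (real n - real m)\<close> gI'
    by (intro bexI[OF _ I'T]) simp
qed

end
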